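(* Let $X\subseteq\bar{X}$ and $Y\subseteq\bar{Y}$ be convex closures of Boolean metric spaces $X,Y$ over a Boolean ring $B$. Every contractive map $f:X\to Y$ extends to a unique contractive map $\bar{f}:\bar{X}\to\bar{Y}$. Furthermore: (1) $\bar{f}$ is an immersion if and only if $f$ is an immersion, and if $f$ is an isometry then so is $\bar f$; (2) for contractive maps $f:X\to Y$ and $g:Y\to Z$, where $Z\subseteq \bar Z$ is a convex closure, $\overline{g\circ f}=\bar{g}\circ\bar{f}$. In particular, any two convex closures of $X$ are isometric via an isometry restricting to the identity on $X$.
   Context: $B$ is a Boolean ring ($a\vee b=a+b+ab$, $a\le b\iff ab=a$; $a_1\oplus\cdots\oplus a_n$ denotes a sum of pairwise disjoint elements). A Boolean metric space over $B$: set $X$ with $d:X\times X\to B$, $d(x,y)=0\iff x=y$, symmetric, $d(x,z)\le d(x,y)\vee d(y,z)$. For $x_1,\dots,x_n\in X$, $a_i\in B$ with $a_1\oplus\cdots\oplus a_n=1$, $x$ is a convex combination of the $x_i$ with coefficients $a_i$ if $a_id(x,x_i)=0$ for all $i$; $X$ is convex if all such combinations exist. A convex closure of $X$ is a convex metric space $\bar X\supseteq X$ whose metric restricts to that of $X$ and in which every element is a convex combination of elements of $X$. A map $f$ is contractive if $d(f(x),f(y))\le d(x,y)$, an immersion if equality holds, and an isometry if it is a bijective immersion. *)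

theory Defs
  imports Main
begin

definition boolean_ring :: "'b::comm_ring_1 itself \<Rightarrow> bool" where
  "boolean_ring _ \<longleftrightarrow> (\<forall>x::'b. x * x = x)"

definition bjoin :: "'b::comm_ring_1 \<Rightarrow> 'b \<Rightarrow> 'b" where
  "bjoin a b = a + b + a * b"

definition ble :: "'b::comm_ring_1 \<Rightarrow> 'b \<Rightarrow> bool" where
  "ble a b \<longleftrightarrow> a * b = a"

definition bool_metric :: "'a set \<Rightarrow> ('a \<Rightarrow> 'a \<Rightarrow> 'b::comm_ring_1) \<Rightarrow> bool" where
  "bool_metric S d \<longleftrightarrow>
     (\<forall>x\<in>S. \<forall>y\<in>S. d x y = 0 \<longleftrightarrow> x = y) \<and>
     (\<forall>x\<in>S. \<forall>y\<in>S. d x y = d y x) \<and>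
     (\<forall>x\<in>S. \<forall>y\<in>S. \<forall>z\<in>S. ble (d x z) (bjoin (d x y) (d y z)))"

definition partition_one :: "nat \<Rightarrow> (nat \<Rightarrow> 'b::comm_ring_1) \<Rightarrow> bool" where
  "partition_one n a \<longleftrightarrow>
     (\<forall>i<n. \<forall>j<n. i \<noteq> j \<longrightarrow> a i * a j = 0) \<and> (\<Sum>i<n. a i) = 1"

definition convex_comb ::
  "('a \<Rightarrow> 'a \<Rightarrow> 'b::comm_ring_1) \<Rightarrow> 'a \<Rightarrow> nat \<Rightarrow> (nat \<Rightarrow> 'a) \<Rightarrow> (nat \<Rightarrow> 'b) \<Rightarrow> bool" where
  "convex_comb d x n xs a \<longleftrightarrow> (\<forall>i<n. a i * d x (xs i) = 0)"

definition bool_convex :: "'a set \<Rightarrow> ('a \<Rightarrow> 'a \<Rightarrow> 'b::comm_ring_1) \<Rightarrow> bool" where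
  "bool_convex S d \<longleftrightarrow>
     (\<forall>n xs a. (\<forall>i<n. xs i \<in> S) \<and> partition_one n a \<longrightarrow>
        (\<exists>x\<in>S. convex_comb d x n xs a))"

definition convex_closure ::
  "'a set \<Rightarrow> ('a \<Rightarrow> 'a \<Rightarrow> 'b::comm_ring_1) \<Rightarrow> 'a set \<Rightarrow> ('a \<Rightarrow> 'a \<Rightarrow> 'b) \<Rightarrow> bool" where
  "convex_closure X d Xb db \<longleftrightarrow>
     bool_metric X d \<and> X \<subseteq> Xb \<and> bool_metric Xb db \<and> bool_convex Xb db \<and>
     (\<forall>x\<in>X. \<forall>y\<in>X. db x y = d x y) \<and>
     (\<forall>x\<in>Xb. \<exists>n xs a. (\<forall>i<n. xs i \<in> X) \<and> partition_one n a \<and> convex_comb db x n xs a)"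

definition contractive ::
  "'a set \<Rightarrow> ('a \<Rightarrow> 'a \<Rightarrow> 'b::comm_ring_1) \<Rightarrow> 'c set \<Rightarrow> ('c \<Rightarrow> 'c \<Rightarrow> 'b) \<Rightarrow> ('a \<Rightarrow> 'c) \<Rightarrow> bool" where
  "contractive X dX Y dY f \<longleftrightarrow>
     (\<forall>x\<in>X. f x \<in> Y) \<and> (\<forall>x\<in>X. \<forall>y\<in>X. ble (dY (f x) (f y)) (dX x y))"

definition immersion ::
  "'a set \<Rightarrow> ('a \<Rightarrow> 'a \<Rightarrow> 'b::comm_ring_1) \<Rightarrow> 'c set \<Rightarrow> ('c \<Rightarrow> 'c \<Rightarrow> 'b) \<Rightarrow> ('a \<Rightarrow> 'c) \<Rightarrow> bool" where
  "immersion X dX Y dY f \<longleftrightarrow>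
     (\<forall>x\<in>X. f x \<in> Y) \<and> (\<forall>x\<in>X. \<forall>y\<in>X. dY (f x) (f y) = dX x y)"

definition isometry ::
  "'a set \<Rightarrow> ('a \<Rightarrow> 'a \<Rightarrow> 'b::comm_ring_1) \<Rightarrow> 'c set \<Rightarrow> ('c \<Rightarrow> 'c \<Rightarrow> 'b) \<Rightarrow> ('a \<Rightarrow> 'c) \<Rightarrow> bool" where
  "isometry X dX Y dY f \<longleftrightarrow> immersion X dX Y dY f \<and> bij_betw f X Y"

definition contractive_ext ::
  "'a set \<Rightarrow> 'a set \<Rightarrow> ('a \<Rightarrow> 'a \<Rightarrow> 'b::comm_ring_1) \<Rightarrow> 'c set \<Rightarrow> ('c \<Rightarrow> 'c \<Rightarrow> 'b)
     \<Rightarrow> ('a \<Rightarrow> 'c) \<Rightarrow> ('a \<Rightarrow> 'c) \<Rightarrow> bool" where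
  "contractive_ext X Xb dXb Yb dYb f fb \<longleftrightarrow>
     contractive Xb dXb Yb dYb fb \<and> (\<forall>x\<in>X. fb x = f x)"

end

theory Submission imports Defs begin
lemma sum2:
  fixes a b :: "nat \<Rightarrow> 'b::comm_ring_1"
  assumes "(\<Sum>i<n. a i) = 1" "(\<Sum>j<m. b j) = 1"
    "\<forall>i<n. \<forall>j<m. a i * b j * D = a i * b j * E"
  shows "D = E"
proof -
  have e: "(\<Sum>i<n. \<Sum>j<m. a i * b j * X) = X" for X
  proof -
    have "(\<Sum>i<n. \<Sum>j<m. a i * b j * X) = (\<Sum>i<n. a i) * (\<Sum>j<m. b j) * X"
      by (simp add: sum_distrib_left sum_distrib_right mult.assoc sum.swap[of _ "{..<m}"])
    then show ?thesis using assms by simp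
  qed
  have "(\<Sum>i<n. \<Sum>j<m. a i * b j * D) = (\<Sum>i<n. \<Sum>j<m. a i * b j * E)"
    using assms(3) by (intro sum.cong refl) auto
  then show ?thesis using e by simp
qed

lemma sum1:
  fixes a :: "nat \<Rightarrow> 'b::comm_ring_1"
  assumes "(\<Sum>i<n. a i) = 1" "\<forall>i<n. a i * D = 0"
  shows "D = 0"
proof -
  have "D = (\<Sum>i<n. a i) * D" using assms by simp
  also have "\<dots> = (\<Sum>i<n. a i * D)" by (simp add: sum_distrib_right)
  also have "\<dots> = 0" using assms(2) by simp
  finally show ?thesis .
qed

lemma tri:
  fixes d :: "'a \<Rightarrow> 'a \<Rightarrow> 'b::comm_ring_1"
  assumes "bool_metric S d" "x\<in>S" "u\<in>S" "y\<in>S" "c * d x u = 0"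
  shows "c * d x y = c * d x y * d u y"
proof -
  have h: "d x y * (d x u + d u y + d x u * d u y) = d x y"
    using assms unfolding bool_metric_def ble_def bjoin_def by blast
  have "c * d x y = c * (d x y * (d x u + d u y + d x u * d u y))" using h by simp
  also have "\<dots> = (c * d x u) * (d x y + d x y * d u y) + c * d x y * d u y"
    by (simp add: algebra_simps)
  finally show ?thesis using assms(5) by simp
qed

lemma comb_eq:
  fixes d :: "'a \<Rightarrow> 'a \<Rightarrow> 'b::comm_ring_1"
  assumes m: "bool_metric S d" and "x\<in>S" "y\<in>S" "\<forall>i<n. xs i \<in> S" "partition_one n a"
    "convex_comb d x n xs a" "convex_comb d y n xs a"
  shows "x = y"
proof -
  have "\<forall>i<n. a i * d x y = 0"
  proof (intro allI impI)
    fix i assume i: "i<n"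
    have "a i * d x y = a i * d x y * d (xs i) y"
      using tri[OF m] assms i unfolding convex_comb_def by blast
    moreover have "d (xs i) y = d y (xs i)" using m assms i unfolding bool_metric_def by blast
    moreover have "a i * d y (xs i) = 0" using assms i unfolding convex_comb_def by blast
    ultimately show "a i * d x y = 0" by (metis mult.assoc mult.commute mult_zero_right)
  qed
  then have "d x y = 0" using sum1 assms(5) unfolding partition_one_def by blast
  then show ?thesis using m assms unfolding bool_metric_def by blast
qed

lemma comb_dist:
  fixes d :: "'a \<Rightarrow> 'a \<Rightarrow> 'b::comm_ring_1"
  assumes m: "bool_metric S d" and S: "y\<in>S" "y'\<in>S" "\<forall>i<n. ys i \<in> S" "\<forall>j<k. ys' j \<in> S"
    and c1: "convex_comb d y n ys a" and c2: "convex_comb d y' k ys' b" and i: "i<n" and j: "j<k"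
  shows "a i * b j * d y y' = a i * b j * d (ys i) (ys' j)"
proof -
  define c where "c = a i * b j"
  have z1: "c * d y (ys i) = 0" using c1 i unfolding convex_comb_def c_def
    by (metis mult.assoc mult.commute mult_zero_right)
  have z2: "c * d y' (ys' j) = 0" using c2 j unfolding convex_comb_def c_def
    by (metis mult.assoc  mult_zero_right)
  have sy: "\<forall>p\<in>S. \<forall>q\<in>S. d p q = d q p" using m unfolding bool_metric_def by blast
  have A: "c * d y y' = c * d y y' * d (ys i) y'" using tri[OF m _ _ _ z1] S i by blast
  have B: "c * d y' (ys i) = c * d y' (ys i) * d (ys' j) (ys i)" using tri[OF m _ _ _ z2] S i j by blast
  have A': "c * d y' y = c * d y' y * d (ys' j) y" using tri[OF m _ _ _ z2] S i j by blast
  have B': "c * d y (ys' j) = c * d y (ys' j) * d (ys i) (ys' j)" using tri[OF m _ _ _ z1] S i j by blast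
  have e1: "d (ys i) y' = d y' (ys i)" "d (ys' j) (ys i) = d (ys i) (ys' j)"
    "d y' y = d y y'" "d (ys' j) y = d y (ys' j)" using sy S i j by auto
  define D where "D = d y y'"
  define E where "E = d (ys i) (ys' j)"
  define F where "F = d y' (ys i)"
  define G where "G = d y (ys' j)"
  have A2: "c*D = c*D*F" using A e1 unfolding D_def F_def by simp
  have B2: "c*F = c*F*E" using B e1 unfolding E_def F_def by simp
  have A3: "c*D = c*D*G" using A' e1 unfolding D_def G_def by simp
  have B3: "c*G = c*G*E" using B' e1 unfolding E_def G_def by simp
  have "c*D = c*D*E"
  proof -
    have "c*D*E = D*(c*F)*E" using A2 by (simp add: ac_simps)
    also have "\<dots> = D*(c*F)" using B2 by (simp add: ac_simps)
    also have "\<dots> = c*D" using A2 by (simp add: ac_simps)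
    finally show ?thesis by simp
  qed
  moreover have "c*E = c*E*D"
  proof -
    have h: "\<forall>p\<in>S. \<forall>q\<in>S. \<forall>r\<in>S. ble (d p r) (bjoin (d p q) (d q r))" using m unfolding bool_metric_def by blast
    have z1': "c * d (ys i) y = 0" using z1 sy S i by auto
    have z2': "c * d (ys' j) y' = 0" using z2 sy S j by auto
    have X1: "c * d (ys i) (ys' j) = c * d (ys i) (ys' j) * d y (ys' j)" using tri[OF m _ _ _ z1'] S i j by blast
    have X2: "c * d (ys' j) y = c * d (ys' j) y * d y' y" using tri[OF m _ _ _ z2'] S i j by blast
    have X1': "c*E = c*E*G" using X1 unfolding E_def G_def .
    have X2': "c*G = c*G*D" using X2 e1 unfolding G_def D_def by simp
    have "c*E*D = E*(c*G)*D" using X1' by (simp add: ac_simps)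
    also have "\<dots> = E*(c*G)" by (metis X2' mult.assoc)
    also have "\<dots> = c*E" using X1' by (simp add: ac_simps)
    finally show ?thesis by simp
  qed
  ultimately have "c*D = c*E" by (simp add: ac_simps)
  then show ?thesis unfolding c_def D_def E_def .
qed

lemma ext_comb:
  assumes cX: "convex_closure X dX Xb dXb"
    and e: "contractive_ext X Xb dXb Yb dYb f fb"
    and x: "x \<in> Xb" and xs: "\<forall>i<n. xs i \<in> X" and cc: "convex_comb dXb x n xs a"
  shows "convex_comb dYb (fb x) n (\<lambda>i. f (xs i)) a"
  unfolding convex_comb_def
proof (intro allI impI)
  fix i assume i: "i<n"
  have XX: "X \<subseteq> Xb" using cX unfolding convex_closure_def by blast
  have xi: "xs i \<in> Xb" using xs i XX by blast
  have "dYb (fb x) (fb (xs i)) * dXb x (xs i) = dYb (fb x) (fb (xs i))"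
    using e x xi unfolding contractive_ext_def contractive_def ble_def by blast
  moreover have "fb (xs i) = f (xs i)" using e xs i unfolding contractive_ext_def by blast
  moreover have "a i * dXb x (xs i) = 0" using cc i unfolding convex_comb_def by blast
  ultimately show "a i * dYb (fb x) (f (xs i)) = 0" by (metis mult.assoc mult.commute mult_zero_right)
qed

lemma ext_uniq:
  assumes cX: "convex_closure X dX Xb dXb" and cY: "convex_closure Y dY Yb dYb"
    and e1: "contractive_ext X Xb dXb Yb dYb f fb1"
    and e2: "contractive_ext X Xb dXb Yb dYb f fb2" and x: "x \<in> Xb"
  shows "fb1 x = fb2 x"
proof -
  obtain n xs a where r: "\<forall>i<n. xs i \<in> X" "partition_one n a" "convex_comb dXb x n xs a"
    using cX x unfolding convex_closure_def by blast
  have XX: "X \<subseteq> Xb" using cX unfolding convex_closure_def by blast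
  have m: "bool_metric Yb dYb" using cY unfolding convex_closure_def by blast
  have S: "\<forall>i<n. f (xs i) \<in> Yb" using r XX e1 unfolding contractive_ext_def contractive_def by (metis subsetD)
  show ?thesis
    apply (rule comb_eq[OF m _ _ S r(2)])
    using e1 e2 x ext_comb[OF cX e1 x r(1) r(3)] ext_comb[OF cX e2 x r(1) r(3)]
    unfolding contractive_ext_def contractive_def by auto
qed

lemma ext_exists:
  fixes dX :: "'a \<Rightarrow> 'a \<Rightarrow> 'b::comm_ring_1"
  assumes cX: "convex_closure X dX Xb dXb" and cY: "convex_closure Y dY Yb dYb"
    and f: "contractive X dX Y dY f"
  shows "\<exists>fb. contractive_ext X Xb dXb Yb dYb f fb"
proof -
  have XX: "X \<subseteq> Xb" and YY: "Y \<subseteq> Yb" and mX: "bool_metric Xb dXb" and mY: "bool_metric Yb dYb"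
    and cvY: "bool_convex Yb dYb" and eX: "\<forall>x\<in>X. \<forall>y\<in>X. dXb x y = dX x y"
    and eY: "\<forall>x\<in>Y. \<forall>y\<in>Y. dYb x y = dY x y"
    using cX cY unfolding convex_closure_def by blast+
  have fY: "\<forall>x\<in>X. f x \<in> Y" and fc: "\<forall>x\<in>X. \<forall>y\<in>X. dY (f x) (f y) * dX x y = dY (f x) (f y)"
    using f unfolding contractive_def ble_def by blast+
  define P where "P x y \<longleftrightarrow> y \<in> Yb \<and> (\<forall>n xs a. (\<forall>i<n. xs i\<in>X) \<and> partition_one n a \<and> convex_comb dXb x n xs a
        \<longrightarrow> convex_comb dYb y n (\<lambda>i. f (xs i)) a)" for x y
  have key: "y = y'" if x: "x \<in> Xb" and r1: "\<forall>i<n. xs i\<in>X" "partition_one n a" "convex_comb dXb x n xs a"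
    and r2: "\<forall>j<k. zs j\<in>X" "partition_one k b" "convex_comb dXb x k zs b"
    and y: "y \<in> Yb" "convex_comb dYb y n (\<lambda>i. f (xs i)) a"
    and y': "y' \<in> Yb" "convex_comb dYb y' k (\<lambda>i. f (zs i)) b" for x n xs a k zs b y y'
  proof -
    have "\<forall>i<n. \<forall>j<k. a i * b j * dYb y y' = a i * b j * 0"
    proof (intro allI impI)
      fix i j assume i: "i<n" and j: "j<k"
      have S1: "\<forall>i<n. f (xs i) \<in> Yb" "\<forall>j<k. f (zs j) \<in> Yb" using r1 r2 fY YY by auto
      have "a i * b j * dYb y y' = a i * b j * dYb (f (xs i)) (f (zs j))"
        using comb_dist[OF mY y(1) y'(1) S1 y(2) y'(2) i j] .
      also have "\<dots> = a i * b j * dY (f (xs i)) (f (zs j))" using eY fY r1 r2 i j by auto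
      also have "\<dots> = 0"
      proof -
        have "a i * b j * dXb x x = a i * b j * dXb (xs i) (zs j)"
          using comb_dist[OF mX x x _ _ r1(3) r2(3) i j] r1 r2 XX by blast
        moreover have "dXb x x = 0" using mX x unfolding bool_metric_def by blast
        moreover have "dXb (xs i) (zs j) = dX (xs i) (zs j)" using eX r1 r2 i j by auto
        moreover have "dY (f (xs i)) (f (zs j)) * dX (xs i) (zs j) = dY (f (xs i)) (f (zs j))"
          using fc r1 r2 i j by auto
        ultimately show ?thesis by (metis mult.assoc mult.commute mult_zero_left mult_zero_right)
      qed
      finally show "a i * b j * dYb y y' = a i * b j * 0" by simp
    qed
    then have "dYb y y' = 0" using sum2[where n=n and a=a and m=k and b=b] r1(2) r2(2) unfolding partition_one_def by blast
    then show ?thesis using mY y y' unfolding bool_metric_def by blast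
  qed
  have ex: "\<exists>y. P x y" if x: "x \<in> Xb" for x
  proof -
    obtain n xs a where r: "\<forall>i<n. xs i \<in> X" "partition_one n a" "convex_comb dXb x n xs a"
      using cX x unfolding convex_closure_def by blast
    obtain y where y: "y \<in> Yb" "convex_comb dYb y n (\<lambda>i. f (xs i)) a"
      using cvY r fY YY unfolding bool_convex_def by (metis subsetD)
    have "P x y" unfolding P_def
    proof (intro conjI y(1) allI impI)
      fix k zs b assume r2: "(\<forall>i<k. zs i\<in>X) \<and> partition_one k b \<and> convex_comb dXb x k zs b"
      obtain y' where y': "y' \<in> Yb" "convex_comb dYb y' k (\<lambda>i. f (zs i)) b"
        using cvY r2 fY YY unfolding bool_convex_def by (metis subsetD)
      have "y = y'" using key[OF x r _ _ _ y y'] r2 by blast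
      then show "convex_comb dYb y k (\<lambda>i. f (zs i)) b" using y' by simp
    qed
    then show ?thesis by blast
  qed
  define fb where "fb x = (SOME y. P x y)" for x
  have Pfb: "P x (fb x)" if "x \<in> Xb" for x unfolding fb_def using ex[OF that] by (rule someI_ex)
  have "contractive_ext X Xb dXb Yb dYb f fb"
    unfolding contractive_ext_def contractive_def ble_def
  proof (intro conjI ballI)
    fix x assume "x \<in> Xb" then show "fb x \<in> Yb" using Pfb unfolding P_def by blast
  next
    fix x z assume x: "x \<in> Xb" and z: "z \<in> Xb"
    obtain n xs a where r1: "\<forall>i<n. xs i \<in> X" "partition_one n a" "convex_comb dXb x n xs a"
      using cX x unfolding convex_closure_def by blast
    obtain k zs b where r2: "\<forall>i<k. zs i \<in> X" "partition_one k b" "convex_comb dXb z k zs b"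
      using cX z unfolding convex_closure_def by blast
    have c1: "fb x \<in> Yb" "convex_comb dYb (fb x) n (\<lambda>i. f (xs i)) a" using Pfb[OF x] r1 unfolding P_def by blast+
    have c2: "fb z \<in> Yb" "convex_comb dYb (fb z) k (\<lambda>i. f (zs i)) b" using Pfb[OF z] r2 unfolding P_def by blast+
    have "\<forall>i<n. \<forall>j<k. a i * b j * (dYb (fb x) (fb z) * dXb x z) = a i * b j * dYb (fb x) (fb z)"
    proof (intro allI impI)
      fix i j assume i: "i<n" and j: "j<k"
      define c where "c = a i * b j"
      have S1: "\<forall>i<n. f (xs i) \<in> Yb" "\<forall>j<k. f (zs j) \<in> Yb" using r1 r2 fY YY by auto
      have h1: "c * dYb (fb x) (fb z) = c * dY (f (xs i)) (f (zs j))"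
        using comb_dist[OF mY c1(1) c2(1) S1 c1(2) c2(2) i j] eY fY r1 r2 i j unfolding c_def by auto
      have h2: "c * dXb x z = c * dX (xs i) (zs j)"
        using comb_dist[OF mX x z _ _ r1(3) r2(3) i j] r1 r2 XX eX i j unfolding c_def by auto
      have h3: "dY (f (xs i)) (f (zs j)) * dX (xs i) (zs j) = dY (f (xs i)) (f (zs j))"
        using fc r1 r2 i j by auto
      have "c * (dYb (fb x) (fb z) * dXb x z) = dYb (fb x) (fb z) * (c * dXb x z)" by (simp add: ac_simps)
      also have "\<dots> = dX (xs i) (zs j) * (c * dYb (fb x) (fb z))" using h2 by (simp add: ac_simps)
      also have "\<dots> = c * dYb (fb x) (fb z)" using h1 h3 by (metis mult.assoc mult.commute)
      finally show "a i * b j * (dYb (fb x) (fb z) * dXb x z) = a i * b j * dYb (fb x) (fb z)"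
        unfolding c_def .
    qed
    then show "dYb (fb x) (fb z) * dXb x z = dYb (fb x) (fb z)"
      using sum2[where n=n and a=a and m=k and b=b] r1(2) r2(2) unfolding partition_one_def by blast
  next
    fix x assume x0: "x \<in> X"
    then have x: "x \<in> Xb" using XX by blast
    obtain n xs a where r1: "\<forall>i<n. xs i \<in> X" "partition_one n a" "convex_comb dXb x n xs a"
      using cX x unfolding convex_closure_def by blast
    have c1: "fb x \<in> Yb" "convex_comb dYb (fb x) n (\<lambda>i. f (xs i)) a" using Pfb[OF x] r1 unfolding P_def by blast+
    have c2: "convex_comb dYb (f x) n (\<lambda>i. f (xs i)) a" unfolding convex_comb_def
    proof (intro allI impI)
      fix i assume i: "i<n"
      have "dYb (f x) (f (xs i)) = dY (f x) (f (xs i))" using eY fY x0 r1 i by auto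
      moreover have "dY (f x) (f (xs i)) * dX x (xs i) = dY (f x) (f (xs i))" using fc x0 r1 i by auto
      moreover have "dXb x (xs i) = dX x (xs i)" using eX x0 r1 i by auto
      moreover have "a i * dXb x (xs i) = 0" using r1 i unfolding convex_comb_def by blast
      ultimately show "a i * dYb (f x) (f (xs i)) = 0" by (metis mult.assoc mult.commute mult_zero_right)
    qed
    show "fb x = f x"
      apply (rule comb_eq[OF mY c1(1) _ _ r1(2) c1(2) c2])
      using fY x0 YY r1 by auto
  qed
  then show ?thesis by blast
qed

lemma ext_imm:
  fixes dX :: "'a \<Rightarrow> 'a \<Rightarrow> 'b::comm_ring_1"
  assumes cX: "convex_closure X dX Xb dXb" and cY: "convex_closure Y dY Yb dYb"
    and f: "contractive X dX Y dY f" and e: "contractive_ext X Xb dXb Yb dYb f fb"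
  shows "immersion Xb dXb Yb dYb fb \<longleftrightarrow> immersion X dX Y dY f"
proof -
  have XX: "X \<subseteq> Xb" and YY: "Y \<subseteq> Yb" and mX: "bool_metric Xb dXb" and mY: "bool_metric Yb dYb"
    and eX: "\<forall>x\<in>X. \<forall>y\<in>X. dXb x y = dX x y"
    and eY: "\<forall>x\<in>Y. \<forall>y\<in>Y. dYb x y = dY x y"
    using cX cY unfolding convex_closure_def by blast+
  have fY: "\<forall>x\<in>X. f x \<in> Y" using f unfolding contractive_def by blast
  have fbY: "\<forall>x\<in>Xb. fb x \<in> Yb" and fbf: "\<forall>x\<in>X. fb x = f x"
    using e unfolding contractive_ext_def contractive_def by blast+
  show ?thesis
  proof
    assume "immersion Xb dXb Yb dYb fb"
    then show "immersion X dX Y dY f" unfolding immersion_def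
      using fY XX eX eY fbf by (metis subsetD)
  next
    assume im: "immersion X dX Y dY f"
    have fi: "\<forall>x\<in>X. \<forall>y\<in>X. dY (f x) (f y) = dX x y" using im unfolding immersion_def by blast
    show "immersion Xb dXb Yb dYb fb" unfolding immersion_def
    proof (intro conjI ballI)
      fix x assume "x\<in>Xb" then show "fb x \<in> Yb" using fbY by blast
    next
      fix x z assume x: "x \<in> Xb" and z: "z \<in> Xb"
      obtain n xs a where r1: "\<forall>i<n. xs i \<in> X" "partition_one n a" "convex_comb dXb x n xs a"
        using cX x unfolding convex_closure_def by blast
      obtain k zs b where r2: "\<forall>i<k. zs i \<in> X" "partition_one k b" "convex_comb dXb z k zs b"
        using cX z unfolding convex_closure_def by blast
      have c1: "convex_comb dYb (fb x) n (\<lambda>i. f (xs i)) a" using ext_comb[OF cX e x r1(1) r1(3)] .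
      have c2: "convex_comb dYb (fb z) k (\<lambda>i. f (zs i)) b" using ext_comb[OF cX e z r2(1) r2(3)] .
      have "\<forall>i<n. \<forall>j<k. a i * b j * dYb (fb x) (fb z) = a i * b j * dXb x z"
      proof (intro allI impI)
        fix i j assume i: "i<n" and j: "j<k"
        have S1: "\<forall>i<n. f (xs i) \<in> Yb" "\<forall>j<k. f (zs j) \<in> Yb" using r1 r2 fY YY by auto
        have "a i * b j * dYb (fb x) (fb z) = a i * b j * dY (f (xs i)) (f (zs j))"
          using comb_dist[OF mY _ _ S1 c1 c2 i j] fbY x z eY fY r1 r2 i j by auto
        also have "\<dots> = a i * b j * dXb (xs i) (zs j)" using fi eX r1 r2 i j by auto
        also have "\<dots> = a i * b j * dXb x z"
          using comb_dist[OF mX x z _ _ r1(3) r2(3) i j] r1 r2 XX by (metis subsetD)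
        finally show "a i * b j * dYb (fb x) (fb z) = a i * b j * dXb x z" .
      qed
      then show "dYb (fb x) (fb z) = dXb x z"
        using sum2[where n=n and a=a and m=k and b=b] r1(2) r2(2) unfolding partition_one_def by blast
    qed
  qed
qed

lemma ext_iso:
  fixes dX :: "'a \<Rightarrow> 'a \<Rightarrow> 'b::comm_ring_1"
  assumes cX: "convex_closure X dX Xb dXb" and cY: "convex_closure Y dY Yb dYb"
    and f: "contractive X dX Y dY f" and e: "contractive_ext X Xb dXb Yb dYb f fb"
    and iso: "isometry X dX Y dY f"
  shows "isometry Xb dXb Yb dYb fb"
proof -
  have XX: "X \<subseteq> Xb" and YY: "Y \<subseteq> Yb" and mX: "bool_metric Xb dXb" and mY: "bool_metric Yb dYb"
    and cvX: "bool_convex Xb dXb"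
    using cX cY unfolding convex_closure_def by blast+
  have im: "immersion Xb dXb Yb dYb fb" using ext_imm[OF cX cY f e] iso unfolding isometry_def by blast
  have bij: "bij_betw f X Y" using iso unfolding isometry_def by blast
  have fbf: "\<forall>x\<in>X. fb x = f x" using e unfolding contractive_ext_def by blast
  have inj: "inj_on fb Xb"
  proof (rule inj_onI)
    fix x z assume x: "x\<in>Xb" and z: "z\<in>Xb" and h: "fb x = fb z"
    have "dYb (fb x) (fb z) = 0" using h mY im x unfolding bool_metric_def immersion_def by metis
    then have "dXb x z = 0" using im x z unfolding immersion_def by metis
    then show "x = z" using mX x z unfolding bool_metric_def by blast
  qed
  have sur: "fb ` Xb = Yb"
  proof
    show "fb ` Xb \<subseteq> Yb" using im unfolding immersion_def by blast
  next
    show "Yb \<subseteq> fb ` Xb"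
    proof
      fix y assume y: "y \<in> Yb"
      obtain n ys a where r: "\<forall>i<n. ys i \<in> Y" "partition_one n a" "convex_comb dYb y n ys a"
        using cY y unfolding convex_closure_def by blast
      define xs where "xs i = inv_into X f (ys i)" for i
      have xsX: "\<forall>i<n. xs i \<in> X" using r bij unfolding xs_def bij_betw_def by (metis inv_into_into)
      have fxs: "\<forall>i<n. f (xs i) = ys i" using r bij unfolding xs_def bij_betw_def by (metis f_inv_into_f)
      obtain x where x: "x \<in> Xb" "convex_comb dXb x n xs a"
        using cvX xsX XX r(2) unfolding bool_convex_def by (metis subsetD)
      have c: "convex_comb dYb (fb x) n (\<lambda>i. f (xs i)) a" using ext_comb[OF cX e x(1) xsX x(2)] .
      have c': "convex_comb dYb (fb x) n ys a" using c fxs unfolding convex_comb_def by simp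
      have "fb x = y"
        apply (rule comb_eq[OF mY _ y _ r(2) c' r(3)])
        using im x r YY unfolding immersion_def by auto
      then show "y \<in> fb ` Xb" using x by blast
    qed
  qed
  show ?thesis unfolding isometry_def bij_betw_def using im inj sur by blast
qed

lemma ble_trans: "ble (p::'b::comm_ring_1) q \<Longrightarrow> ble q r \<Longrightarrow> ble p r"
  unfolding ble_def by (metis mult.assoc)

theorem mainTheorem15:
  fixes dX :: "'a \<Rightarrow> 'a \<Rightarrow> 'b::comm_ring_1" and dXb :: "'a \<Rightarrow> 'a \<Rightarrow> 'b"
    and dY dYb :: "'c \<Rightarrow> 'c \<Rightarrow> 'b" and dZ dZb :: "'d \<Rightarrow> 'd \<Rightarrow> 'b"
    and X Xb :: "'a set" and Y Yb :: "'c set" and Z Zb :: "'d set"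
  assumes B: "boolean_ring TYPE('b)"
    and cX: "convex_closure X dX Xb dXb"
    and cY: "convex_closure Y dY Yb dYb"
    and cZ: "convex_closure Z dZ Zb dZb"
  shows
    "(\<forall>f. contractive X dX Y dY f \<longrightarrow>
        (\<exists>fb. contractive_ext X Xb dXb Yb dYb f fb) \<and>
        (\<forall>fb1 fb2. contractive_ext X Xb dXb Yb dYb f fb1 \<and> contractive_ext X Xb dXb Yb dYb f fb2
            \<longrightarrow> (\<forall>x\<in>Xb. fb1 x = fb2 x)))
     \<and> (\<forall>f fb. contractive X dX Y dY f \<and> contractive_ext X Xb dXb Yb dYb f fb \<longrightarrow>
          (immersion Xb dXb Yb dYb fb \<longleftrightarrow> immersion X dX Y dY f) \<and>
          (isometry X dX Y dY f \<longrightarrow> isometry Xb dXb Yb dYb fb))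
     \<and> (\<forall>f g fb gb gfb. contractive X dX Y dY f \<and> contractive Y dY Z dZ g \<and>
          contractive_ext X Xb dXb Yb dYb f fb \<and> contractive_ext Y Yb dYb Zb dZb g gb \<and>
          contractive_ext X Xb dXb Zb dZb (g \<circ> f) gfb \<longrightarrow>
          (\<forall>x\<in>Xb. gfb x = (gb \<circ> fb) x))
     \<and> (\<forall>Xb' dXb'. convex_closure X dX Xb' dXb' \<longrightarrow>
          (\<exists>h. isometry Xb dXb Xb' dXb' h \<and> (\<forall>x\<in>X. h x = x)))"
proof (intro conjI allI impI)
  fix f assume f: "contractive X dX Y dY f"
  show "\<exists>fb. contractive_ext X Xb dXb Yb dYb f fb" using ext_exists[OF cX cY f] .
next
  fix f fb1 fb2
  assume "contractive X dX Y dY f" and h: "contractive_ext X Xb dXb Yb dYb f fb1 \<and> contractive_ext X Xb dXb Yb dYb f fb2"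
  then show "\<forall>x\<in>Xb. fb1 x = fb2 x" using ext_uniq[OF cX cY] by blast
next
  fix f fb assume h: "contractive X dX Y dY f \<and> contractive_ext X Xb dXb Yb dYb f fb"
  then show "immersion Xb dXb Yb dYb fb = immersion X dX Y dY f" using ext_imm[OF cX cY] by blast
next
  fix f fb assume h: "contractive X dX Y dY f \<and> contractive_ext X Xb dXb Yb dYb f fb"
    and "isometry X dX Y dY f"
  then show "isometry Xb dXb Yb dYb fb" using ext_iso[OF cX cY] by blast
next
  fix f g fb gb gfb
  assume h: "contractive X dX Y dY f \<and> contractive Y dY Z dZ g \<and>
          contractive_ext X Xb dXb Yb dYb f fb \<and> contractive_ext Y Yb dYb Zb dZb g gb \<and>
          contractive_ext X Xb dXb Zb dZb (g \<circ> f) gfb"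
  have "contractive_ext X Xb dXb Zb dZb (g \<circ> f) (gb \<circ> fb)"
    unfolding contractive_ext_def contractive_def
  proof (intro conjI ballI)
    fix x assume "x \<in> Xb" then show "(gb \<circ> fb) x \<in> Zb"
      using h unfolding contractive_ext_def contractive_def by simp
  next
    fix x y assume x: "x \<in> Xb" and y: "y \<in> Xb"
    have "fb x \<in> Yb" "fb y \<in> Yb" using h x y unfolding contractive_ext_def contractive_def by auto
    then show "ble (dZb ((gb \<circ> fb) x) ((gb \<circ> fb) y)) (dXb x y)"
      using h x y ble_trans unfolding contractive_ext_def contractive_def comp_def by metis
  next
    fix x assume x: "x \<in> X"
    then show "(gb \<circ> fb) x = (g \<circ> f) x"
      using h unfolding contractive_ext_def contractive_def by simp
  qed
  then show "\<forall>x\<in>Xb. gfb x = (gb \<circ> fb) x" using ext_uniq[OF cX cZ] h by blast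
next
  fix Xb' dXb' assume c': "convex_closure X dX Xb' dXb'"
  have idc: "contractive X dX X dX id" using B
    unfolding contractive_def boolean_ring_def ble_def by simp
  have idi: "isometry X dX X dX id" unfolding isometry_def immersion_def by simp
  obtain h where h: "contractive_ext X Xb dXb Xb' dXb' id h" using ext_exists[OF cX c' idc] by blast
  have "isometry Xb dXb Xb' dXb' h" using ext_iso[OF cX c' idc h idi] .
  moreover have "\<forall>x\<in>X. h x = x" using h unfolding contractive_ext_def by simp
  ultimately show "\<exists>h. isometry Xb dXb Xb' dXb' h \<and> (\<forall>x\<in>X. h x = x)" by blast
qed

end
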